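(* Let $\mathbf{k}$ be an admissible index. Then the multiple series defining $Z(\mathbf{k};\alpha,\beta)$ converges absolutely for $(\alpha,\beta)\in\{(\alpha,\beta)\in\mathbb{C}^2:\mathrm{Re}\,\alpha>0,\ \beta\notin\mathbb{Z}_{\le0}\}$ and uniformly on every compact subset of this set.
   Context: An index $(k_1,\ldots,k_n)$ is admissible if all $k_i$ are positive integers and $k_n\ge2$. For $a\in\mathbb{C}$, $(a)_0=1$ and $(a)_m=a(a+1)\cdots(a+m-1)$ for $m\ge1$. For an admissible index $\mathbf{k}=(k_1,\ldots,k_n)$, \[ Z(k_1,\ldots,k_n;\alpha,\beta)=\sum_{0\le m_1<\cdots<m_n}\frac{(\alpha)_{m_1}}{m_1!}\frac{m_n!}{(\alpha)_{m_n+1}}\frac{1}{(m_1+\beta)^{k_1}\cdots(m_{n-1}+\beta)^{k_{n-1}}(m_n+\beta)^{k_n-1}}. \] *)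

theory Defs
  imports "HOL-Analysis.Analysis"
begin

definition admissible :: "nat list \<Rightarrow> bool" where
  "admissible k \<longleftrightarrow> k \<noteq> [] \<and> (\<forall>x\<in>set k. 0 < x) \<and> 2 \<le> last k"

definition Zdom :: "nat \<Rightarrow> nat list set" where
  "Zdom n = {ms. length ms = n \<and> sorted_wrt (<) ms}"

definition Zterm :: "nat list \<Rightarrow> complex \<Rightarrow> complex \<Rightarrow> nat list \<Rightarrow> complex" where
  "Zterm k \<alpha> \<beta> ms =
     pochhammer \<alpha> (hd ms) / fact (hd ms)
     * (fact (last ms) / pochhammer \<alpha> (last ms + 1))
     / ((\<Prod>i<length k - 1. (of_nat (ms ! i) + \<beta>) ^ (k ! i))
        * (of_nat (last ms) + \<beta>) ^ (last k - 1))"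

definition Zparams :: "(complex \<times> complex) set" where
  "Zparams = {(\<alpha>, \<beta>). 0 < Re \<alpha> \<and> (\<forall>j::nat. \<beta> \<noteq> - of_nat j)}"

end

theory Submission
  imports Defs
begin


lemma prodlist_summable:
  fixes f :: "nat \<Rightarrow> real"
  assumes f0: "\<And>x. f x \<ge> 0" and fs: "f summable_on UNIV"
  shows "(\<lambda>ms. prod_list (map f ms)) summable_on {ms. length ms = n}"
proof (induction n)
  case 0
  have "{ms::nat list. length ms = 0} = {[]}" by auto
  then show ?case by simp
next
  case (Suc n)
  let ?P = "\<lambda>ms. prod_list (map f ms)"
  have eq: "{ms::nat list. length ms = Suc n} = (\<lambda>(x,xs). x#xs) ` (UNIV \<times> {xs. length xs = n})"
    by (auto simp: length_Suc_conv image_iff)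
  have inj: "inj_on (\<lambda>(x,xs). x#xs) (UNIV \<times> {xs::nat list. length xs = n})"
    by (auto simp: inj_on_def)
  have "(\<lambda>(x,xs). f x * ?P xs) summable_on (UNIV \<times> {xs. length xs = n})"
  proof (rule summable_on_SigmaI[where g = "\<lambda>x. f x * infsum ?P {xs. length xs = n}"])
    fix x :: nat
    show "((\<lambda>y. case (x, y) of (x, xs) \<Rightarrow> f x * ?P xs) has_sum f x * infsum ?P {xs. length xs = n}) {xs. length xs = n}"
      using has_sum_cmult_right[OF Suc[unfolded summable_iff_has_sum_infsum], of "f x"] by simp
  next
    show "(\<lambda>x. f x * infsum ?P {xs. length xs = n}) summable_on UNIV"
      using summable_on_cmult_left[OF fs] by simp
  next
    fix x :: nat and y :: "nat list"
    show "0 \<le> (case (x, y) of (x, xs) \<Rightarrow> f x * ?P xs)"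
    proof -
      have "0 \<le> ?P y" by (rule prod_list_nonneg) (use f0 in auto)
      then show ?thesis using f0[of x] by simp
    qed
  qed
  then have "(?P \<circ> (\<lambda>(x,xs). x#xs)) summable_on (UNIV \<times> {xs. length xs = n})"
    by (simp add: comp_def case_prod_unfold)
  then show ?case unfolding eq using summable_on_reindex[OF inj] by blast
qed

lemma norm_pochhammer_ge:
  fixes z :: complex
  assumes "0 \<le> a" "a \<le> Re z"
  shows "pochhammer a n \<le> norm (pochhammer z n)"
proof -
  have "pochhammer a n = (\<Prod>i=0..<n. a + of_nat i)" by (simp add: pochhammer_prod)
  also have "\<dots> \<le> (\<Prod>i=0..<n. norm (z + of_nat i))"
  proof (rule prod_mono)
    fix i assume "i \<in> {0..<n}"
    have "a + of_nat i \<le> Re (z + of_nat i)" using assms by simp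
    also have "\<dots> \<le> norm (z + of_nat i)" by (rule complex_Re_le_cmod)
    finally show "0 \<le> a + real i \<and> a + real i \<le> norm (z + of_nat i)" using assms by simp
  qed
  also have "\<dots> = norm (pochhammer z n)" by (simp add: pochhammer_prod prod_norm)
  finally show ?thesis .
qed

lemma ratio_bound:
  fixes \<alpha> :: complex
  assumes a: "0 < a" "a \<le> 1" "a \<le> Re \<alpha>" and m: "m1 \<le> m2"
  shows "norm (pochhammer \<alpha> m1 / fact m1 * (fact m2 / pochhammer \<alpha> (m2+1))) \<le> fact m2 / pochhammer a (m2+1)"
proof -
  obtain d where d: "m2 + 1 = m1 + (d+1)" using m by (metis add.commute le_Suc_ex add_Suc_right Suc_eq_plus1)
  define P1 where "P1 = pochhammer \<alpha> m1"
  define P2 where "P2 = pochhammer (\<alpha> + of_nat m1) (d+1)"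
  have split: "pochhammer \<alpha> (m2+1) = P1 * P2" unfolding d P1_def P2_def by (rule pochhammer_product')
  have rsplit: "pochhammer a (m2+1) = pochhammer a m1 * pochhammer (a + of_nat m1) (d+1)"
    unfolding d by (rule pochhammer_product')
  have n1: "pochhammer a m1 \<le> norm P1" unfolding P1_def using a by (intro norm_pochhammer_ge) auto
  have n2: "pochhammer (a + of_nat m1) (d+1) \<le> norm P2" unfolding P2_def using a by (intro norm_pochhammer_ge) auto
  have pa1: "0 < pochhammer a m1" using a by (simp add: pochhammer_pos)
  have pa2: "0 < pochhammer (a + of_nat m1) (d+1)" using a by (intro pochhammer_pos) simp
  have P1nz: "P1 \<noteq> 0" using n1 pa1 by auto
  have af: "pochhammer a m1 \<le> fact m1"
  proof -
    have "pochhammer a m1 \<le> pochhammer 1 m1"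
      unfolding pochhammer_prod using a by (intro prod_mono) auto
    then show ?thesis by (simp add: pochhammer_fact)
  qed
  have "norm (pochhammer \<alpha> m1 / fact m1 * (fact m2 / pochhammer \<alpha> (m2+1)))
        = fact m2 / (fact m1 * norm P2)"
    using P1nz unfolding split P1_def[symmetric]
    by (simp add: norm_mult norm_divide field_simps norm_fact)
  also have "\<dots> \<le> fact m2 / (pochhammer a m1 * pochhammer (a + of_nat m1) (d+1))"
    using pa1 pa2 af n2 by (intro divide_left_mono mult_mono mult_pos_pos) auto
  also have "\<dots> = fact m2 / pochhammer a (m2+1)" by (subst rsplit) (rule refl)
  finally show ?thesis .
qed

lemma gamma_bound:
  fixes a :: real
  assumes a: "0 < a"
  shows "\<exists>G>0. \<forall>m. fact m / pochhammer a (m+1) \<le> G * (real m + 1) powr (-a)"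
proof -
  have "a \<notin> \<int>\<^sub>\<le>\<^sub>0" using a by (auto elim!: nonpos_Ints_cases)
  have "convergent (Gamma_series a)" using Gamma_series_LIMSEQ[of a] by (auto simp: convergent_def)
  then have "Bseq (Gamma_series a)" by (rule convergent_imp_Bseq)
  then obtain B where B: "B > 0" "\<And>n. norm (Gamma_series a n) \<le> B" by (auto simp: Bseq_def)
  define G where "G = B * 2 powr a + 1 / a"
  have Gpos: "G > 0" unfolding G_def using a B by (intro add_pos_pos) auto
  have "fact m / pochhammer a (m+1) \<le> G * (real m + 1) powr (-a)" for m
  proof (cases "m = 0")
    case True
    then show ?thesis using a B by (simp add: G_def)
  next
    case False
    have pp: "0 < pochhammer a (m+1)" using a by (simp add: pochhammer_pos)
    have gs: "Gamma_series a m = fact m * real m powr a / pochhammer a (m+1)"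
      using False by (simp add: Gamma_series_def powr_def)
    have "fact m / pochhammer a (m+1) = Gamma_series a m * real m powr (-a)"
      using False by (simp add: gs powr_minus field_simps)
    also have "\<dots> \<le> B * real m powr (-a)"
      using B(2)[of m] by (intro mult_right_mono) auto
    also have "real m powr (-a) \<le> 2 powr a * (real m + 1) powr (-a)"
    proof -
      have "(real m + 1) powr a \<le> (2 * real m) powr a" using False a by (intro powr_mono2) auto
      also have "\<dots> = 2 powr a * real m powr a" by (simp add: powr_mult)
      finally show ?thesis using False by (simp add: powr_minus field_simps)
    qed
    then have "B * real m powr (-a) \<le> B * (2 powr a * (real m + 1) powr (-a))"
      using B by (intro mult_left_mono) auto
    also have "\<dots> \<le> G * (real m + 1) powr (-a)"
      unfolding G_def using a by (simp add: algebra_simps)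
    finally show ?thesis .
  qed
  then show ?thesis using Gpos by blast
qed



lemma compact_params:
  assumes K: "compact K" "K \<subseteq> Zparams"
  shows "\<exists>a c. 0 < a \<and> a \<le> 1 \<and> 0 < c \<and> c \<le> 1 \<and>
     (\<forall>p\<in>K. a \<le> Re (fst p) \<and> (\<forall>m::nat. c * (real m + 1) \<le> norm (of_nat m + snd p)))"
proof -
  have K1: "compact (fst ` K)"
    by (rule compact_continuous_image[OF continuous_on_fst[OF continuous_on_id] K(1)])
  have K2: "compact (snd ` K)"
    by (rule compact_continuous_image[OF continuous_on_snd[OF continuous_on_id] K(1)])
  have pK: "0 < Re (fst p) \<and> (\<forall>j::nat. snd p \<noteq> - of_nat j)" if "p \<in> K" for p
    using K(2) that unfolding Zparams_def by auto
  have "\<forall>x\<in>fst ` K. 0 < Re x" using pK by auto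
  then have dj1: "fst ` K \<inter> {z. Re z \<le> 0} = {}" by fastforce
  obtain d1 where d1: "d1 > 0" "\<forall>x\<in>fst ` K. \<forall>y\<in>{z. Re z \<le> 0}. d1 \<le> dist x y"
    using separate_compact_closed[OF K1 closed_halfspace_Re_le dj1] by (elim exE conjE) (rule that)
  define S where "S = range (\<lambda>j::nat. - (of_nat j :: complex))"
  have clS: "closed S" unfolding S_def
  proof (rule discrete_imp_closed[of 1])
    show "\<forall>x\<in>range (\<lambda>j::nat. - (of_nat j :: complex)). \<forall>y\<in>range (\<lambda>j::nat. - (of_nat j :: complex)). dist y x < 1 \<longrightarrow> y = x"
    proof (clarify)
      fix i j :: nat assume 1: "dist (- (of_nat i :: complex)) (- of_nat j) < 1"
      have 2: "(- (of_nat i :: complex)) - (- of_nat j) = of_real (real j - real i)" by simp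
      have "\<bar>real j - real i\<bar> < 1" using 1 unfolding dist_norm 2 norm_of_real .
      then show "- (of_nat i :: complex) = - of_nat j" by simp
    qed
  qed simp
  have nS: "snd p \<notin> S" if "p \<in> K" for p
    using pK[OF that] unfolding S_def by blast
  have dj2: "snd ` K \<inter> S = {}" using nS by blast
  obtain d2 where d2: "d2 > 0" "\<forall>x\<in>snd ` K. \<forall>y\<in>S. d2 \<le> dist x y"
    using separate_compact_closed[OF K2 clS dj2] by (elim exE conjE) (rule that)
  obtain B where B: "B > 0" "\<And>x. x \<in> snd ` K \<Longrightarrow> norm x \<le> B"
    using compact_imp_bounded[OF K2] unfolding bounded_pos by blast
  define a where "a = min 1 d1"
  define c where "c = min (1/2) (d2 / (2*B+2))"
  have c_le: "c \<le> 1/2" unfolding c_def by (rule min.cobounded1)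
  have "\<forall>p\<in>K. a \<le> Re (fst p) \<and> (\<forall>m::nat. c * (real m + 1) \<le> norm (of_nat m + snd p))"
  proof (intro ballI conjI allI)
    fix p assume p: "p \<in> K"
    have fp: "fst p \<in> fst ` K" using p by simp
    have ip: "\<i> * of_real (Im (fst p)) \<in> {z. Re z \<le> 0}" by simp
    have "d1 \<le> dist (fst p) (\<i> * of_real (Im (fst p)))"
      using d1(2) fp ip by blast
    also have "dist (fst p) (\<i> * of_real (Im (fst p))) = norm (of_real (Re (fst p)) :: complex)"
      unfolding dist_norm by (rule arg_cong[where f=norm]) (simp add: complex_eq_iff)
    also have "\<dots> = Re (fst p)" using pK[OF p] by simp
    finally show "a \<le> Re (fst p)" unfolding a_def by simp
    fix m :: nat
    have nb: "norm (snd p) \<le> B" using p B(2) by auto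
    show "c * (real m + 1) \<le> norm (of_nat m + snd p)"
    proof (cases "real m \<ge> 2*B+1")
      case True
      have "c * (real m + 1) \<le> (real m + 1)/2"
        using mult_right_mono[OF c_le, of "real m + 1"] by simp
      also have "\<dots> \<le> real m - B" using True by simp
      also have "\<dots> \<le> norm (of_nat m :: complex) - norm (snd p)" using nb by simp
      also have "\<dots> \<le> norm (of_nat m + snd p)" by (rule norm_diff_ineq)
      finally show ?thesis .
    next
      case False
      have "c * (real m + 1) \<le> d2 / (2*B+2) * (real m + 1)" unfolding c_def
        by (intro mult_right_mono) auto
      also have "\<dots> \<le> d2 / (2*B+2) * (2*B+2)"
        using False B d2 by (intro mult_left_mono) auto
      also have "\<dots> = d2" using B by simp
      also have "\<dots> \<le> dist (snd p) (- of_nat m)"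
      proof -
        have "snd p \<in> snd ` K" using p by simp
        moreover have "- of_nat m \<in> S" unfolding S_def by simp
        ultimately show ?thesis using d2(2) by blast
      qed
      also have "\<dots> = norm (of_nat m + snd p)" by (simp add: dist_norm add.commute)
      finally show ?thesis .
    qed
  qed
  moreover have "0 < a" "a \<le> 1" "0 < c" "c \<le> 1" using d1 d2 B by (auto simp: a_def c_def)
  ultimately show ?thesis by blast
qed


lemma uniform_limit_majorant:
  fixes f :: "'p \<Rightarrow> 'a \<Rightarrow> complex"
  assumes Ms: "M summable_on D" and M0: "\<And>x. 0 \<le> M x"
    and bd: "\<And>p x. p \<in> K \<Longrightarrow> x \<in> D \<Longrightarrow> norm (f p x) \<le> M x"
  shows "uniform_limit K (\<lambda>F p. \<Sum>x\<in>F. f p x) (\<lambda>p. infsum (f p) D) (finite_subsets_at_top D)"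
proof (rule uniform_limitI)
  fix e :: real assume e: "e > 0"
  define S where "S = infsum M D"
  have "(sum M \<longlongrightarrow> S) (finite_subsets_at_top D)"
    using Ms unfolding S_def summable_iff_has_sum_infsum has_sum_def by simp
  then have "eventually (\<lambda>F. dist (sum M F) S < e) (finite_subsets_at_top D)"
    using e by (rule tendstoD)
  then obtain F0 where F0: "finite F0" "F0 \<subseteq> D" "dist (sum M F0) S < e"
    unfolding eventually_finite_subsets_at_top by blast
  have absf: "(\<lambda>x. norm (f p x)) summable_on D" if "p \<in> K" for p
    by (rule Infinite_Sum.abs_summable_on_comparison_test'[OF Ms]) (use bd that in auto)
  show "eventually (\<lambda>F. \<forall>p\<in>K. dist (\<Sum>x\<in>F. f p x) (infsum (f p) D) < e) (finite_subsets_at_top D)"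
    unfolding eventually_finite_subsets_at_top
  proof (rule exI[of _ F0], intro conjI allI impI ballI)
    fix Y p assume Y: "finite Y \<and> F0 \<subseteq> Y \<and> Y \<subseteq> D" and p: "p \<in> K"
    have fs: "f p summable_on D" by (rule abs_summable_summable[OF absf[OF p]])
    have nsub: "(\<lambda>x. norm (f p x)) summable_on (D - Y)" by (rule summable_on_subset[OF absf[OF p]]) auto
    have Msub: "M summable_on (D - Y)" by (rule summable_on_subset[OF Ms]) auto
    have Msub0: "M summable_on (D - F0)" by (rule summable_on_subset[OF Ms]) auto
    have "dist (\<Sum>x\<in>Y. f p x) (infsum (f p) D) = norm (infsum (f p) D - infsum (f p) Y)"
      using Y by (simp add: dist_norm norm_minus_commute)
    also have "\<dots> = norm (infsum (f p) (D - Y))"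
      using Y fs by (subst infsum_Diff) auto
    also have "\<dots> \<le> infsum (\<lambda>x. norm (f p x)) (D - Y)"
      using nsub by (intro norm_infsum_bound) auto
    also have "\<dots> \<le> infsum M (D - Y)"
      using nsub Msub bd p by (intro infsum_mono) auto
    also have "\<dots> \<le> infsum M (D - F0)"
      using Msub Msub0 Y M0 by (intro infsum_mono_neutral) auto
    also have "\<dots> = S - sum M F0"
      using F0 Ms by (subst infsum_Diff) (auto simp: S_def)
    also have "\<dots> < e"
    proof -
      have "sum M F0 = infsum M F0" using F0 by simp
      also have "\<dots> \<le> S" unfolding S_def using F0 Ms M0
        by (intro infsum_mono_neutral) auto
      finally have "sum M F0 \<le> S" .
      then show ?thesis using F0(3) by (simp add: dist_real_def)
    qed
    finally show "dist (\<Sum>x\<in>Y. f p x) (infsum (f p) D) < e" .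
  qed (use F0 in simp_all)
qed



lemma prod_list_map_nth: "prod_list (map f xs) = (\<Prod>i<length xs. f (xs ! i))"
  by (induction xs) (simp_all del: prod.lessThan_Suc add: prod.lessThan_Suc_shift)

lemma pow_lower:
  fixes c x y :: real
  assumes "0 < c" "c * (x + 1) \<le> y" "0 \<le> x" "1 \<le> e"
  shows "c ^ e * (x + 1) \<le> y ^ e"
proof -
  have "x + 1 \<le> (x + 1) ^ e" using assms by (intro self_le_power) auto
  then have "c ^ e * (x + 1) \<le> c ^ e * (x + 1) ^ e" using assms by (intro mult_left_mono) auto
  also have "\<dots> = (c * (x + 1)) ^ e" by (simp add: power_mult_distrib)
  also have "\<dots> \<le> y ^ e" using assms by (intro power_mono) auto
  finally show ?thesis .
qed

lemma term_bound:
  assumes adm: "admissible k" and K: "compact K" "K \<subseteq> Zparams"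
  shows "\<exists>M. (\<forall>ms. 0 \<le> M ms) \<and> M summable_on Zdom (length k) \<and>
     (\<forall>p\<in>K. \<forall>ms\<in>Zdom (length k). norm (Zterm k (fst p) (snd p) ms) \<le> M ms)"
proof -
  obtain a c where ac: "0 < a" "a \<le> 1" "0 < c" "c \<le> 1"
    and Kac: "\<And>p. p \<in> K \<Longrightarrow> a \<le> Re (fst p) \<and> (\<forall>m::nat. c * (real m + 1) \<le> norm (of_nat m + snd p))"
    using compact_params[OF K] by blast
  obtain G where G: "G > 0" "\<And>m. fact m / pochhammer a (m+1) \<le> G * (real m + 1) powr (-a)"
    using gamma_bound[OF ac(1)] by blast
  define n where "n = length k"
  have kne: "k \<noteq> []" and kpos: "\<And>x. x \<in> set k \<Longrightarrow> 0 < x" and lk: "2 \<le> last k"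
    using adm by (auto simp: admissible_def)
  have n1: "n \<ge> 1" using kne by (simp add: n_def Suc_le_eq)
  have kpos': "\<And>i. i < n - 1 \<Longrightarrow> 1 \<le> k ! i"
    using kpos n1 by (simp add: n_def Suc_le_eq)
  define s where "s = a / real n"
  have s0: "s > 0" using ac n1 by (simp add: s_def)
  define f where "f x = (real x + 1) powr (-1 - s)" for x :: nat
  define L where "L = (\<Prod>i<n-1. c ^ (k ! i)) * c ^ (last k - 1)"
  have L0: "L > 0" unfolding L_def using ac by (intro mult_pos_pos prod_pos zero_less_power) auto
  define M where "M ms = G / L * prod_list (map f ms)" for ms
  have f0: "\<And>x. 0 \<le> f x" by (simp add: f_def)
  have M0: "\<forall>ms. 0 \<le> M ms"
  proof
    fix ms
    have "0 \<le> prod_list (map f ms)" by (rule prod_list_nonneg) (use f0 in auto)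
    then show "0 \<le> M ms" using G L0 by (simp add: M_def)
  qed
  have fsum: "f summable_on UNIV"
  proof -
    have "summable (\<lambda>x. real x powr (-1 - s))" using s0 by (simp add: summable_real_powr_iff)
    then have "summable (\<lambda>x. real (Suc x) powr (-1 - s))" by (subst summable_Suc_iff)
    then have "summable f" unfolding f_def by (simp add: add.commute)
    then show ?thesis using f0 by (simp add: summable_on_UNIV_nonneg_real_iff)
  qed
  have Msum: "M summable_on Zdom n"
  proof -
    have "(\<lambda>ms. prod_list (map f ms)) summable_on Zdom n"
      by (rule summable_on_subset[OF prodlist_summable[OF f0 fsum, of n]]) (auto simp: Zdom_def)
    then show ?thesis unfolding M_def by (rule summable_on_cmult_right)
  qed
  have bound: "norm (Zterm k (fst p) (snd p) ms) \<le> M ms" if p: "p \<in> K" and ms: "ms \<in> Zdom n" for p ms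
  proof -
    define \<alpha> where "\<alpha> = fst p"
    define \<beta> where "\<beta> = snd p"
    have aRe: "a \<le> Re \<alpha>" and cb: "\<And>m::nat. c * (real m + 1) \<le> norm (of_nat m + \<beta>)"
      using Kac[OF p] by (auto simp: \<alpha>_def \<beta>_def)
    have len: "length ms = n" and sw: "sorted_wrt (<) ms" using ms by (auto simp: Zdom_def)
    have msne: "ms \<noteq> []" using len n1 by auto
    define mN where "mN = ms ! (n-1)"
    have lastms: "last ms = mN" using msne len by (simp add: mN_def last_conv_nth)
    have hdms: "hd ms = ms ! 0" using msne by (simp add: hd_conv_nth)
    have le_mN: "ms ! i \<le> mN" if "i < n" for i
    proof (cases "i = n - 1")
      case True then show ?thesis by (simp add: mN_def)
    next
      case False
      then have "ms ! i < ms ! (n-1)" using that n1 len by (intro sorted_wrt_nth_less[OF sw]) auto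
      then show ?thesis by (simp add: mN_def)
    qed
    have hdle: "hd ms \<le> last ms" unfolding hdms lastms using le_mN n1 by simp
    define R where "R = pochhammer \<alpha> (hd ms) / fact (hd ms) * (fact (last ms) / pochhammer \<alpha> (last ms + 1))"
    define D1 where "D1 = (\<Prod>i<n - 1. (of_nat (ms ! i) + \<beta>) ^ (k ! i))"
    define D2 where "D2 = (of_nat (last ms) + \<beta>) ^ (last k - 1)"
    have Zt: "Zterm k (fst p) (snd p) ms = R / (D1 * D2)"
      by (simp add: Zterm_def R_def D1_def D2_def \<alpha>_def \<beta>_def n_def)
    define P where "P = (\<Prod>i<n. real (ms ! i) + 1)"
    have P0: "P > 0" unfolding P_def by (intro prod_pos) auto
    have RN: "norm R \<le> G * (real mN + 1) powr (-a)"
    proof -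
      have "norm R \<le> fact (last ms) / pochhammer a (last ms + 1)"
        unfolding R_def using ac aRe hdle by (intro ratio_bound) auto
      also have "\<dots> \<le> G * (real mN + 1) powr (-a)" using G(2) lastms by simp
      finally show ?thesis .
    qed
    have D1b: "(\<Prod>i<n-1. c ^ (k ! i) * (real (ms ! i) + 1)) \<le> norm D1"
    proof -
      have "(\<Prod>i<n-1. c ^ (k ! i) * (real (ms ! i) + 1)) \<le> (\<Prod>i<n-1. norm (of_nat (ms ! i) + \<beta>) ^ (k ! i))"
      proof (rule prod_mono)
        fix i assume i: "i \<in> {..<n-1}"
        show "0 \<le> c ^ (k ! i) * (real (ms ! i) + 1) \<and> c ^ (k ! i) * (real (ms ! i) + 1) \<le> norm (of_nat (ms ! i) + \<beta>) ^ (k ! i)"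
          using ac cb[of "ms ! i"] kpos'[of i] i by (auto intro!: pow_lower)
      qed
      also have "\<dots> = norm D1" by (simp add: D1_def prod_norm[symmetric] norm_power)
      finally show ?thesis .
    qed
    have D2b: "c ^ (last k - 1) * (real mN + 1) \<le> norm D2"
      unfolding D2_def norm_power lastms using ac cb[of mN] lk by (intro pow_lower) auto
    have Db: "L * P \<le> norm (D1 * D2)"
    proof -
      have "L * P = (\<Prod>i<n-1. c ^ (k ! i) * (real (ms ! i) + 1)) * (c ^ (last k - 1) * (real mN + 1))"
      proof -
        have "P = (\<Prod>i<n-1. real (ms ! i) + 1) * (real mN + 1)"
        proof -
          obtain n' where n': "n = Suc n'" using n1 by (cases n) auto
          show ?thesis unfolding P_def mN_def n' by simp
        qed
        then show ?thesis unfolding L_def prod.distrib by (simp only: mult_ac)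
      qed
      also have "\<dots> \<le> norm D1 * norm D2"
        using D1b D2b ac by (intro mult_mono prod_nonneg) auto
      finally show ?thesis by (simp add: norm_mult)
    qed
    have powb: "(real mN + 1) powr (-a) \<le> (\<Prod>i<n. (real (ms ! i) + 1) powr (-s))"
    proof -
      have "(real mN + 1) powr (-a) = (\<Prod>i<n. (real mN + 1) powr (-s))"
        using n1 by (simp add: powr_power s_def)
      also have "\<dots> \<le> (\<Prod>i<n. (real (ms ! i) + 1) powr (-s))"
        using s0 le_mN by (intro prod_mono conjI powr_mono2') auto
      finally show ?thesis .
    qed
    have "norm (Zterm k (fst p) (snd p) ms) = norm R / norm (D1 * D2)" by (simp add: Zt norm_divide)
    also have "\<dots> \<le> G * (real mN + 1) powr (-a) / (L * P)"
      using RN Db L0 P0 G by (intro frac_le mult_pos_pos) auto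
    also have "\<dots> \<le> G * (\<Prod>i<n. (real (ms ! i) + 1) powr (-s)) / (L * P)"
      using powb G L0 P0 by (intro divide_right_mono mult_left_mono) auto
    also have "\<dots> = G / L * ((\<Prod>i<n. (real (ms ! i) + 1) powr (-s)) / P)"
      by simp
    also have "(\<Prod>i<n. (real (ms ! i) + 1) powr (-s)) / P = (\<Prod>i<n. f (ms ! i))"
    proof -
      have q: "y powr (-s) / y = y powr (-1 - s)" if "y > 0" for y :: real
      proof -
        have e: "-1 - s = -s - 1" by simp
        have "y powr (-s - 1) = y powr (-s) / y powr 1" by (rule powr_diff)
        then show ?thesis using that by (simp only: e powr_one_gt_zero_iff) simp
      qed
      show ?thesis
        unfolding P_def f_def prod_dividef[symmetric]
        by (rule prod.cong[OF refl], rule q) simp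
    qed
    also have "(\<Prod>i<n. f (ms ! i)) = prod_list (map f ms)" using len by (simp add: prod_list_map_nth)
    finally show ?thesis by (simp add: M_def)
  qed
  show ?thesis using M0 Msum bound unfolding n_def by blast
qed


theorem lemma2p1:
  fixes k :: "nat list"
  assumes "admissible k"
  shows "(\<forall>p\<in>Zparams.
            ((\<lambda>ms. norm (Zterm k (fst p) (snd p) ms)) summable_on Zdom (length k)))
       \<and> (\<forall>K. compact K \<and> K \<subseteq> Zparams \<longrightarrow>
            uniform_limit K
              (\<lambda>F p. \<Sum>ms\<in>F. Zterm k (fst p) (snd p) ms)
              (\<lambda>p. \<Sum>\<^sub>\<infinity>ms\<in>Zdom (length k). Zterm k (fst p) (snd p) ms)
              (finite_subsets_at_top (Zdom (length k))))"
proof (intro conjI ballI allI impI)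
  fix p assume p: "p \<in> Zparams"
  obtain M where M: "\<forall>ms. 0 \<le> M ms" "M summable_on Zdom (length k)"
    "\<forall>q\<in>{p}. \<forall>ms\<in>Zdom (length k). norm (Zterm k (fst q) (snd q) ms) \<le> M ms"
    using term_bound[OF assms compact_sing[of p]] p by blast
  show "(\<lambda>ms. norm (Zterm k (fst p) (snd p) ms)) summable_on Zdom (length k)"
    by (rule Infinite_Sum.abs_summable_on_comparison_test'[OF M(2)]) (use M(3) in simp)
next
  fix K :: "(complex \<times> complex) set" assume K: "compact K \<and> K \<subseteq> Zparams"
  obtain M where M: "\<forall>ms. 0 \<le> M ms" "M summable_on Zdom (length k)"
    "\<forall>q\<in>K. \<forall>ms\<in>Zdom (length k). norm (Zterm k (fst q) (snd q) ms) \<le> M ms"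
    using term_bound[OF assms] K by blast
  show "uniform_limit K
              (\<lambda>F p. \<Sum>ms\<in>F. Zterm k (fst p) (snd p) ms)
              (\<lambda>p. \<Sum>\<^sub>\<infinity>ms\<in>Zdom (length k). Zterm k (fst p) (snd p) ms)
              (finite_subsets_at_top (Zdom (length k)))"
    by (rule uniform_limit_majorant[where f = "\<lambda>p ms. Zterm k (fst p) (snd p) ms", OF M(2)])
       (use M in auto)
qed

end
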